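(* Let $\beta\in(1,3/2]$. Suppose $\omega,\omega'\in\Omega$ and $\upsilon,\upsilon'\in\Upsilon$ satisfy $\omega\prec\omega'$ and $\upsilon\prec\upsilon'$. Then for every $\vec z\in S_\beta$, $$(d_1(\omega,\upsilon,\vec z),d_2(\omega,\upsilon,\vec z),\ldots)\preceq(d_1(\omega',\upsilon',\vec z),d_2(\omega',\upsilon',\vec z),\ldots).$$
   Context: Let $\vec q_0=(0,0)$, $\vec q_1=(1,0)$, $\vec q_2=(0,1)$, $f_{\vec q_i}(\vec z)=(\vec z+\vec q_i)/\beta$, and $S_\beta$ the attractor of this IFS, which for $1<\beta\le3/2$ is the closed triangle with vertices $(0,0)$, $(\frac1{\beta-1},0)$, $(0,\frac1{\beta-1})$. Subsets of $S_\beta$: $E_0=[0,\frac1\beta)\times[0,\frac1\beta)$; $E_1=\{0\le y<\frac1\beta,\ \frac{1}{\beta(\beta-1)}<x+y\le\frac{1}{\beta-1}\}$; $E_2=\{0\le x<\frac1\beta,\ \frac{1}{\beta(\beta-1)}<x+y\le\frac{1}{\beta-1}\}$; $C_{01}=\{x\ge\frac1\beta,\ 0\le y<\frac1\beta,\ x+y\le\frac{1}{\beta(\beta-1)}\}$; $C_{12}=\{x\ge\frac1\beta,\ y\ge\frac1\beta,\ \frac{1}{\beta(\beta-1)}<x+y\le\frac{1}{\beta-1}\}$; $C_{02}=\{0\le x<\frac1\beta,\ y\ge\frac1\beta,\ x+y\le\frac{1}{\beta(\beta-1)}\}$; $C_{012}=\{x\ge\frac1\beta,\ y\ge\frac1\beta,\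 x+y\le\frac{1}{\beta(\beta-1)}\}$. Let $\Omega=\{0,1\}^{\mathbb N}$, $\Upsilon=\{0,1,2\}^{\mathbb N}$, with left shifts $\sigma$, $\sigma'$. Define $K_\beta:\Omega\times\Upsilon\times S_\beta\to\Omega\times\Upsilon\times S_\beta$ by: $K_\beta(\omega,\upsilon,\vec z)=(\omega,\upsilon,\beta\vec z-\vec q_i)$ if $\vec z\in E_i$; $=(\sigma\omega,\upsilon,\beta\vec z-\vec q_i)$ if $\omega_1=0$ and $\vec z\in C_{ij}$, $ij\in\{01,12,02\}$; $=(\sigma\omega,\upsilon,\beta\vec z-\vec q_j)$ if $\omega_1=1$ and $\vec z\in C_{ij}$; $=(\omega,\sigma'\upsilon,\beta\vec z-\vec q_i)$ if $\vec z\in C_{012}$ and $\upsilon_1=i$. The digit $d_1(\omega,\upsilon,\vec z)\in\{\vec q_0,\vec q_1,\vec q_2\}$ is the vector subtracted in this definition (so the third coordinate of $K_\beta(\omega,\upsilon,\vec z)$ is $\beta\vec z-d_1$), and $d_n=d_1\circ K_\beta^{n-1}$. The relation $\prec$ ($\preceq$) denotes the (strict / non-strict) lexicographic order on $\Omega$, on $\Upsilon$, and on $\{\vec q_0,\vec q_1,\vec q_2\}^{\mathbb N}$, where in the last case symbols are ordered $\vec q_0<\vec q_1<\vec q_2$. *)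

theory Defs
  imports Main "HOL.Real"
begin

(* Points of the plane are pairs of reals; sequences in Omega / Upsilon are
   functions nat => nat, with index 0 playing the role of the paper's index 1. *)

type_synonym pt = "real \<times> real"
type_synonym state = "(nat \<Rightarrow> nat) \<times> (nat \<Rightarrow> nat) \<times> pt"

definition qvec :: "nat \<Rightarrow> pt" where
  "qvec i = (if i = 0 then (0, 0) else if i = 1 then (1, 0) else (0, 1))"

(* S_beta: for 1 < beta <= 3/2, the attractor is this closed triangle *)
definition S_beta :: "real \<Rightarrow> pt set" where
  "S_beta b = {(x, y). 0 \<le> x \<and> 0 \<le> y \<and> x + y \<le> 1 / (b - 1)}"

definition E0 :: "real \<Rightarrow> pt set" where
  "E0 b = S_beta b \<inter> {(x, y). 0 \<le> x \<and> x < 1/b \<and> 0 \<le> y \<and> y < 1/b}"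
definition E1 :: "real \<Rightarrow> pt set" where
  "E1 b = S_beta b \<inter> {(x, y). 0 \<le> y \<and> y < 1/b \<and> 1/(b*(b-1)) < x + y \<and> x + y \<le> 1/(b-1)}"
definition E2 :: "real \<Rightarrow> pt set" where
  "E2 b = S_beta b \<inter> {(x, y). 0 \<le> x \<and> x < 1/b \<and> 1/(b*(b-1)) < x + y \<and> x + y \<le> 1/(b-1)}"
definition C01 :: "real \<Rightarrow> pt set" where
  "C01 b = S_beta b \<inter> {(x, y). x \<ge> 1/b \<and> 0 \<le> y \<and> y < 1/b \<and> x + y \<le> 1/(b*(b-1))}"
definition C12 :: "real \<Rightarrow> pt set" where
  "C12 b = S_beta b \<inter> {(x, y). x \<ge> 1/b \<and> y \<ge> 1/b \<and> 1/(b*(b-1)) < x + y \<and> x + y \<le> 1/(b-1)}"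
definition C02 :: "real \<Rightarrow> pt set" where
  "C02 b = S_beta b \<inter> {(x, y). 0 \<le> x \<and> x < 1/b \<and> y \<ge> 1/b \<and> x + y \<le> 1/(b*(b-1))}"
definition C012 :: "real \<Rightarrow> pt set" where
  "C012 b = S_beta b \<inter> {(x, y). x \<ge> 1/b \<and> y \<ge> 1/b \<and> x + y \<le> 1/(b*(b-1))}"

definition shift :: "(nat \<Rightarrow> nat) \<Rightarrow> (nat \<Rightarrow> nat)" where
  "shift w = (\<lambda>n. w (Suc n))"

definition expand :: "real \<Rightarrow> pt \<Rightarrow> nat \<Rightarrow> pt" where
  "expand b z i = (b * fst z - fst (qvec i), b * snd z - snd (qvec i))"

definition digit_idx :: "real \<Rightarrow> state \<Rightarrow> nat" where
  "digit_idx b s = (case s of (w, u, z) \<Rightarrow>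
     if z \<in> E0 b then 0
     else if z \<in> E1 b then 1
     else if z \<in> E2 b then 2
     else if z \<in> C01 b then (if w 0 = 0 then 0 else 1)
     else if z \<in> C12 b then (if w 0 = 0 then 1 else 2)
     else if z \<in> C02 b then (if w 0 = 0 then 0 else 2)
     else if z \<in> C012 b then u 0
     else 0)"

(* the map K_beta (outside S_beta the value is irrelevant) *)
definition K :: "real \<Rightarrow> state \<Rightarrow> state" where
  "K b s = (case s of (w, u, z) \<Rightarrow>
     if z \<in> E0 b \<or> z \<in> E1 b \<or> z \<in> E2 b then (w, u, expand b z (digit_idx b s))
     else if z \<in> C01 b \<or> z \<in> C12 b \<or> z \<in> C02 b then (shift w, u, expand b z (digit_idx b s))
     else if z \<in> C012 b then (w, shift u, expand b z (digit_idx b s))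
     else s)"

(* d_{n+1}(s) = d_1(K^n s); the paper's d_1 is "dseq b s 0" *)
definition dseq :: "real \<Rightarrow> state \<Rightarrow> nat \<Rightarrow> pt" where
  "dseq b s n = qvec (digit_idx b ((K b ^^ n) s))"

definition lex_less :: "(nat \<Rightarrow> 'a::linorder) \<Rightarrow> (nat \<Rightarrow> 'a) \<Rightarrow> bool" where
  "lex_less a c \<longleftrightarrow> (\<exists>n. (\<forall>k<n. a k = c k) \<and> a n < c n)"
definition lex_le :: "(nat \<Rightarrow> 'a::linorder) \<Rightarrow> (nat \<Rightarrow> 'a) \<Rightarrow> bool" where
  "lex_le a c \<longleftrightarrow> a = c \<or> lex_less a c"

definition digit_rank :: "pt \<Rightarrow> nat" where
  "digit_rank v = (if v = qvec 0 then 0 else if v = qvec 1 then 1 else 2)"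

definition digit_lex_le :: "(nat \<Rightarrow> pt) \<Rightarrow> (nat \<Rightarrow> pt) \<Rightarrow> bool" where
  "digit_lex_le a c \<longleftrightarrow> lex_le (digit_rank \<circ> a) (digit_rank \<circ> c)"

end

theory Submission
  imports Defs
begin

lemma shift_off: "shift (\<lambda>j. f (j + k)) = (\<lambda>j. f (j + Suc k))"
  by (simp add: shift_def)

lemma step_inv:
  assumes bw: "\<forall>n. w n \<in> {0, 1}" and bw': "\<forall>n. w' n \<in> {0, 1}"
    and eqw: "\<forall>j<k. w j = w' j" and equ: "\<forall>j<m. u j = u' j"
    and d: "digit_idx b ((\<lambda>j. w (j + k)), (\<lambda>j. u (j + m)), Z) = digit_idx b ((\<lambda>j. w' (j + k)), (\<lambda>j. u' (j + m)), Z)"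
  shows "\<exists>k1 m1 Z1. K b ((\<lambda>j. w (j + k)), (\<lambda>j. u (j + m)), Z) = ((\<lambda>j. w (j + k1)), (\<lambda>j. u (j + m1)), Z1)
     \<and> K b ((\<lambda>j. w' (j + k)), (\<lambda>j. u' (j + m)), Z) = ((\<lambda>j. w' (j + k1)), (\<lambda>j. u' (j + m1)), Z1)
     \<and> (\<forall>j<k1. w j = w' j) \<and> (\<forall>j<m1. u j = u' j)"
proof -
  have wk: "w k = w' k" if "Z \<notin> E0 b" "Z \<notin> E1 b" "Z \<notin> E2 b" "Z \<in> C01 b \<or> Z \<in> C12 b \<or> Z \<in> C02 b"
  proof (cases "w k = 0 \<or> w' k = 0")
    case True
    then show ?thesis using d that by (auto simp: digit_idx_def split: if_splits)
  next
    case False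
    have "w k \<in> {0,1}" "w' k \<in> {0,1}" using bw bw' by auto
    then show ?thesis using False by auto
  qed
  have um: "u m = u' m" if "Z \<notin> E0 b" "Z \<notin> E1 b" "Z \<notin> E2 b" "Z \<notin> C01 b" "Z \<notin> C12 b" "Z \<notin> C02 b" "Z \<in> C012 b"
    using d that by (auto simp: digit_idx_def)
  have eqw': "\<forall>j<Suc k. w j = w' j" if "w k = w' k" using eqw that less_Suc_eq by auto
  have equ': "\<forall>j<Suc m. u j = u' j" if "u m = u' m" using equ that less_Suc_eq by auto
  show ?thesis
  proof (cases "Z \<in> E0 b \<or> Z \<in> E1 b \<or> Z \<in> E2 b")
    case True
    then show ?thesis using eqw equ d unfolding K_def by (intro exI[of _ k] exI[of _ m]) auto
  next
    case F1: False
    show ?thesis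
    proof (cases "Z \<in> C01 b \<or> Z \<in> C12 b \<or> Z \<in> C02 b")
      case True
      then show ?thesis using F1 eqw' wk equ d unfolding K_def
        by (intro exI[of _ "Suc k"] exI[of _ m]) (auto simp: shift_off)
    next
      case F2: False
      show ?thesis
      proof (cases "Z \<in> C012 b")
        case True
        then show ?thesis using F1 F2 equ' um eqw d unfolding K_def
          by (intro exI[of _ k] exI[of _ "Suc m"]) (auto simp: shift_off)
      next
        case False
        then show ?thesis using F1 F2 eqw equ unfolding K_def
          by (intro exI[of _ k] exI[of _ m]) auto
      qed
    qed
  qed
qed

lemma inv:
  assumes bw: "\<forall>n. w n \<in> {0, 1}" and bw': "\<forall>n. w' n \<in> {0, 1}"
  and "\<forall>j<n. digit_idx b ((K b ^^ j) (w, u, z)) = digit_idx b ((K b ^^ j) (w', u', z))"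
  shows "\<exists>k m Z. (K b ^^ n) (w, u, z) = ((\<lambda>j. w (j + k)), (\<lambda>j. u (j + m)), Z)
     \<and> (K b ^^ n) (w', u', z) = ((\<lambda>j. w' (j + k)), (\<lambda>j. u' (j + m)), Z)
     \<and> (\<forall>j<k. w j = w' j) \<and> (\<forall>j<m. u j = u' j)"
  using assms
proof (induction n)
  case 0
  then show ?case by (intro exI[of _ 0] exI[of _ 0] exI[of _ z]) auto
next
  case (Suc n)
  then obtain k m Z where h: "(K b ^^ n) (w, u, z) = ((\<lambda>j. w (j + k)), (\<lambda>j. u (j + m)), Z)"
     "(K b ^^ n) (w', u', z) = ((\<lambda>j. w' (j + k)), (\<lambda>j. u' (j + m)), Z)"
     "\<forall>j<k. w j = w' j" "\<forall>j<m. u j = u' j" by auto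
  have d: "digit_idx b ((\<lambda>j. w (j + k)), (\<lambda>j. u (j + m)), Z) = digit_idx b ((\<lambda>j. w' (j + k)), (\<lambda>j. u' (j + m)), Z)"
    using Suc.prems h by (metis lessI)
  from step_inv[OF bw bw' h(3) h(4) d] show ?case using h by simp
qed

lemma lex_first:
  assumes "lex_less (a::nat\<Rightarrow>nat) c" "\<forall>j<k. a j = c j" "a k \<noteq> c k"
  shows "a k < c k"
proof -
  obtain N where N: "\<forall>j<N. a j = c j" "a N < c N" using assms(1) unfolding lex_less_def by auto
  have "N = k"
  proof (rule ccontr)
    assume "N \<noteq> k"
    then have "N < k \<or> k < N" by auto
    then show False using N assms(2,3) by auto
  qed
  then show ?thesis using N by simp
qed

lemma rank_q: "digit_rank (qvec i) = min i 2"
  by (simp add: digit_rank_def qvec_def)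

lemma rank_lt:
  assumes d: "digit_idx b (W, U, Z) \<noteq> digit_idx b (W', U', Z)"
    and wl: "W 0 \<noteq> W' 0 \<Longrightarrow> W 0 < W' 0" and ul: "U 0 \<noteq> U' 0 \<Longrightarrow> U 0 < U' 0"
    and r: "W 0 \<in> {0,1}" "W' 0 \<in> {0,1}" "U 0 \<in> {0,1,2}" "U' 0 \<in> {0,1,2}"
  shows "digit_rank (qvec (digit_idx b (W, U, Z))) < digit_rank (qvec (digit_idx b (W', U', Z)))"
proof -
  have "digit_idx b (W, U, Z) < digit_idx b (W', U', Z) \<and> digit_idx b (W', U', Z) \<le> 2"
  proof (cases "Z \<in> E0 b \<or> Z \<in> E1 b \<or> Z \<in> E2 b")
    case True then show ?thesis using d
      by (cases "Z \<in> E0 b"; cases "Z \<in> E1 b"; simp add: digit_idx_def)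
  next
    case F1: False
    show ?thesis
    proof (cases "Z \<in> C01 b \<or> Z \<in> C12 b \<or> Z \<in> C02 b")
      case True
      have "W 0 = 0" "W' 0 = 1"
      proof -
        have "W 0 \<noteq> W' 0"
        proof
          assume eq: "W 0 = W' 0"
          show False using d True F1 eq
            by (cases "Z \<in> C01 b"; cases "Z \<in> C12 b"; simp add: digit_idx_def)
        qed
        then show "W 0 = 0" "W' 0 = 1" using wl r by auto
      qed
      then show ?thesis using True F1
        by (cases "Z \<in> C01 b"; cases "Z \<in> C12 b"; simp add: digit_idx_def)
    next
      case F2: False
      show ?thesis
      proof (cases "Z \<in> C012 b")
        case True
        have "U 0 \<noteq> U' 0" using d True F1 F2 by (auto simp: digit_idx_def)
        then show ?thesis using True F1 F2 ul r by (auto simp: digit_idx_def)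
      next
        case False then show ?thesis using d F1 F2 by (auto simp: digit_idx_def)
      qed
    qed
  qed
  then show ?thesis unfolding rank_q by auto
qed

theorem theorem4p1:
  fixes b :: real and w w' u u' :: "nat \<Rightarrow> nat" and z :: pt
  assumes "1 < b" and "b \<le> 3/2"
    and "\<forall>n. w n \<in> {0, 1}" and "\<forall>n. w' n \<in> {0, 1}"
    and "\<forall>n. u n \<in> {0, 1, 2}" and "\<forall>n. u' n \<in> {0, 1, 2}"
    and "lex_less w w'" and "lex_less u u'"
    and "z \<in> S_beta b"
  shows "digit_lex_le (dseq b (w, u, z)) (dseq b (w', u', z))"
proof (cases "\<forall>n. digit_idx b ((K b ^^ n) (w, u, z)) = digit_idx b ((K b ^^ n) (w', u', z))")
  case True
  then show ?thesis unfolding digit_lex_le_def lex_le_def dseq_def by (simp add: comp_def)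
next
  case False
  define P where "P n \<longleftrightarrow> digit_idx b ((K b ^^ n) (w, u, z)) \<noteq> digit_idx b ((K b ^^ n) (w', u', z))" for n
  from False obtain n0 where "P n0" unfolding P_def by auto
  define n where "n = (LEAST n. P n)"
  have Pn: "P n" unfolding n_def by (rule LeastI[of P n0, OF \<open>P n0\<close>])
  have before: "\<forall>j<n. digit_idx b ((K b ^^ j) (w, u, z)) = digit_idx b ((K b ^^ j) (w', u', z))"
    using not_less_Least unfolding n_def P_def by blast
  obtain k m Z where h: "(K b ^^ n) (w, u, z) = ((\<lambda>j. w (j + k)), (\<lambda>j. u (j + m)), Z)"
     "(K b ^^ n) (w', u', z) = ((\<lambda>j. w' (j + k)), (\<lambda>j. u' (j + m)), Z)"
     "\<forall>j<k. w j = w' j" "\<forall>j<m. u j = u' j" using inv[OF assms(3) assms(4) before] by blast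
  have dne: "digit_idx b ((\<lambda>j. w (j + k)), (\<lambda>j. u (j + m)), Z) \<noteq> digit_idx b ((\<lambda>j. w' (j + k)), (\<lambda>j. u' (j + m)), Z)"
    using Pn h unfolding P_def by simp
  have lt: "digit_rank (qvec (digit_idx b ((\<lambda>j. w (j + k)), (\<lambda>j. u (j + m)), Z)))
       < digit_rank (qvec (digit_idx b ((\<lambda>j. w' (j + k)), (\<lambda>j. u' (j + m)), Z)))"
  proof -
    have wlt: "w k < w' k" if "w k \<noteq> w' k" using lex_first[OF assms(7) h(3) that] .
    have ult: "u m < u' m" if "u m \<noteq> u' m" using lex_first[OF assms(8) h(4) that] .
    have wr: "w k \<in> {0,1}" "w' k \<in> {0,1}" "u m \<in> {0,1,2}" "u' m \<in> {0,1,2}" using assms(3-6) by auto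
    show ?thesis using rank_lt[OF dne] wlt ult wr by simp
  qed
  show ?thesis unfolding digit_lex_le_def lex_le_def lex_less_def
  proof (intro disjI2 exI[of _ n] conjI allI impI)
    fix j assume "j < n"
    then show "(digit_rank \<circ> dseq b (w, u, z)) j = (digit_rank \<circ> dseq b (w', u', z)) j"
      using before by (simp add: dseq_def)
  next
    show "(digit_rank \<circ> dseq b (w, u, z)) n < (digit_rank \<circ> dseq b (w', u', z)) n"
      using lt h by (simp add: dseq_def)
  qed
qed

end
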